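(* For every integer $n\ge 1$, the relation $\preceq_{\mathsf{MWC}}$ is a partial order on $\mathcal{G}_{\mathsf{cwvg}}(n)$, and the poset $(\mathcal{G}_{\mathsf{cwvg}}(n),\preceq_{\mathsf{MWC}})$ is graded with rank function $\rho:\mathcal{G}_{\mathsf{cwvg}}(n)\to\mathbb{N}$, $\rho(G)=|W_{\min,G}|$, where $W_{\min,G}$ is the set of minimal winning coalitions of $G$. Moreover, this poset has a least element, and its rank is $0$.
   Context: Let $N=\{1,\dots,n\}$. A simple game on $N$ is a function $v:2^N\to\{0,1\}$ (the game in which every coalition is losing is allowed); coalitions $S$ with $v(S)=1$ are winning, the others losing. A minimal winning coalition is a winning coalition $S$ such that $S\setminus\{i\}$ is losing for every $i\in S$. A simple game is a weighted voting game if there are $q\ge 0$ and $w_1,\dots,w_n\ge 0$ with $v(S)=1\iff\sum_{i\in S}w_i\ge q$ for all $S\subseteq N$; $[q;w_1,\dots,w_n]$ is then a weighted representation. For players $i,j$, write $i\succeq j$ if $v(S\cup\{i\})\ge v(S\cup\{j\})$ for all $S\subseteq N\setminus\{i,j\}$. A canonical weighted voting game on $N$ is a weighted voting game with $1\succeq 2\succeq\cdots\succeq n$; $\mathcal{G}_{\mathsf{cwvg}}(n)$ denotes the set of these. For $G,G'\in\mathcal{G}_{\mathsf{cwvg}}(n)$, $G\preceq_{\mathsf{MWC}}G'$ holds iff there is a sequence $G=G_1,\dots,G_k=G'$ ($k\ge1$) of games in $\mathcal{G}_{\mathsf{cwvg}}(n)$ such that for each $1\le i<k$, $W_{\min,G_i}\subset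 W_{\min,G_{i+1}}$ and $|W_{\min,G_{i+1}}|=|W_{\min,G_i}|+1$. A poset $(S,\preceq)$ is graded with rank function $\rho:S\to\mathbb{N}$ if (i) $\rho$ is constant on the minimal elements, (ii) $x\preceq y$ implies $\rho(x)\le\rho(y)$, and (iii) whenever $y$ covers $x$ (i.e., $x\preceq y$, $x\ne y$, and there is no $z\notin\{x,y\}$ with $x\preceq z\preceq y$) we have $\rho(y)=\rho(x)+1$. *)

theory Defs
  imports Complex_Main
begin

text \<open>A simple game on N = {1..n} is a predicate on coalitions; we fix the convention
that coalitions not contained in {1..n} are losing, so that each game on N has a
unique representative.\<close>

type_synonym game = "nat set \<Rightarrow> bool"

definition simple_game :: "nat \<Rightarrow> game \<Rightarrow> bool" where
  "simple_game n v \<longleftrightarrow> (\<forall>S. \<not> S \<subseteq> {1..n} \<longrightarrow> \<not> v S)"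

definition weighted_game :: "nat \<Rightarrow> game \<Rightarrow> bool" where
  "weighted_game n v \<longleftrightarrow> simple_game n v \<and>
     (\<exists>(q::real) (w::nat \<Rightarrow> real). q \<ge> 0 \<and> (\<forall>i\<in>{1..n}. w i \<ge> 0) \<and>
        (\<forall>S. S \<subseteq> {1..n} \<longrightarrow> (v S \<longleftrightarrow> (\<Sum>i\<in>S. w i) \<ge> q)))"

definition desirable :: "nat \<Rightarrow> game \<Rightarrow> nat \<Rightarrow> nat \<Rightarrow> bool" where
  "desirable n v i j \<longleftrightarrow>
     (\<forall>S. S \<subseteq> {1..n} - {i, j} \<longrightarrow> (v (insert j S) \<longrightarrow> v (insert i S)))"

definition cwvg :: "nat \<Rightarrow> game set" where
  "cwvg n = {v. weighted_game n v \<and> (\<forall>i. 1 \<le> i \<and> i < n \<longrightarrow> desirable n v i (Suc i))}"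

definition wmin :: "nat \<Rightarrow> game \<Rightarrow> nat set set" where
  "wmin n v = {S. S \<subseteq> {1..n} \<and> v S \<and> (\<forall>i\<in>S. \<not> v (S - {i}))}"

definition mwc_step :: "nat \<Rightarrow> game \<Rightarrow> game \<Rightarrow> bool" where
  "mwc_step n G G' \<longleftrightarrow> G \<in> cwvg n \<and> G' \<in> cwvg n \<and>
     wmin n G \<subset> wmin n G' \<and> card (wmin n G') = card (wmin n G) + 1"

definition mwc_rel :: "nat \<Rightarrow> (game \<times> game) set" where
  "mwc_rel n = {(G, G'). G \<in> cwvg n \<and> G' \<in> cwvg n \<and> (mwc_step n)\<^sup>*\<^sup>* G G'}"

definition minimal_in :: "'a set \<Rightarrow> ('a \<times> 'a) set \<Rightarrow> 'a \<Rightarrow> bool" where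
  "minimal_in A r x \<longleftrightarrow> x \<in> A \<and> (\<forall>y\<in>A. (y, x) \<in> r \<longrightarrow> y = x)"

definition covers :: "('a \<times> 'a) set \<Rightarrow> 'a \<Rightarrow> 'a \<Rightarrow> bool" where
  "covers r x y \<longleftrightarrow> (x, y) \<in> r \<and> x \<noteq> y \<and>
     \<not> (\<exists>z. z \<notin> {x, y} \<and> (x, z) \<in> r \<and> (z, y) \<in> r)"

definition graded_poset :: "'a set \<Rightarrow> ('a \<times> 'a) set \<Rightarrow> ('a \<Rightarrow> nat) \<Rightarrow> bool" where
  "graded_poset A r \<rho> \<longleftrightarrow> partial_order_on A r \<and>
     (\<forall>x y. minimal_in A r x \<and> minimal_in A r y \<longrightarrow> \<rho> x = \<rho> y) \<and>
     (\<forall>x y. (x, y) \<in> r \<longrightarrow> \<rho> x \<le> \<rho> y) \<and>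
     (\<forall>x y. covers r x y \<longrightarrow> \<rho> y = \<rho> x + 1)"

end

theory Submission
  imports Defs "HOL-Library.FuncSet"
begin

lemma finite_wmin: "finite (wmin n v)"
proof -
  have "wmin n v \<subseteq> Pow {1..n}" unfolding wmin_def by auto
  thus ?thesis by (rule finite_subset) simp
qed

lemma rt_card:
  assumes "(mwc_step n)\<^sup>*\<^sup>* G G'"
  shows "G = G' \<or> card (wmin n G) < card (wmin n G')"
  using assms
proof (induction rule: rtranclp_induct)
  case base then show ?case by simp
next
  case (step y z)
  then show ?case unfolding mwc_step_def by auto
qed

lemma rt_cwvg:
  assumes "(mwc_step n)\<^sup>*\<^sup>* G G'" "G \<noteq> G'"
  shows "G \<in> cwvg n \<and> G' \<in> cwvg n"
  using assms
proof (induction rule: rtranclp_induct)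
  case base then show ?case by simp
next
  case (step y z)
  then show ?case unfolding mwc_step_def by auto
qed

lemma G0_cwvg: "(\<lambda>S. False) \<in> cwvg n"
proof -
  have "weighted_game n (\<lambda>S. False)"
    unfolding weighted_game_def simple_game_def
    by (rule conjI, simp, rule exI[of _ 1], rule exI[of _ "\<lambda>_. 0"]) simp
  thus ?thesis unfolding cwvg_def desirable_def by simp
qed

lemma G0_wmin: "wmin n (\<lambda>S. False) = {}"
  unfolding wmin_def by simp

definition rep :: "nat \<Rightarrow> game \<Rightarrow> real \<Rightarrow> (nat \<Rightarrow> real) \<Rightarrow> bool" where
  "rep n v q w \<longleftrightarrow> q \<ge> 0 \<and> (\<forall>i\<in>{1..n}. w i \<ge> 0) \<and> (\<forall>S. S \<subseteq> {1..n} \<longrightarrow> (v S \<longleftrightarrow> q \<le> sum w S))"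

lemma rep_mono:
  assumes "rep n v q w" "S \<subseteq> T" "T \<subseteq> {1..n}" "v S"
  shows "v T"
proof -
  have fT: "finite T" using assms(3) finite_subset by blast
  have "sum w S \<le> sum w T"
    by (rule sum_mono2[OF fT assms(2)]) (use assms(1,3) in \<open>auto simp: rep_def\<close>)
  moreover have "q \<le> sum w S" using assms unfolding rep_def by auto
  ultimately show ?thesis using assms unfolding rep_def by auto
qed

lemma repD: "rep n v q w \<Longrightarrow> S \<subseteq> {1..n} \<Longrightarrow> v S \<longleftrightarrow> q \<le> sum w S"
  unfolding rep_def by auto

lemma sum_rm: "finite A \<Longrightarrow> a \<in> A \<Longrightarrow> sum f A = f a + sum f (A - {a})"
  by (simp add: sum.remove)

lemma swap_rep:
  assumes r: "rep n v q w" and d: "desirable n v k (Suc k)" and k: "1 \<le> k" "k < n"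
    and lt: "w k < w (Suc k)"
  shows "rep n v q (w(k := w (Suc k), Suc k := w k))" (is "rep n v q ?w")
proof -
  have sym: "v (insert k T) \<longleftrightarrow> v (insert (Suc k) T)" if T: "T \<subseteq> {1..n} - {k, Suc k}" for T
  proof
    assume "v (insert (Suc k) T)" thus "v (insert k T)" using d T unfolding desirable_def by auto
  next
    assume a: "v (insert k T)"
    have fT: "finite T" using T finite_subset by blast
    have kT: "insert k T \<subseteq> {1..n}" using T k by auto
    have "q \<le> sum w (insert k T)" using a repD[OF r kT] by auto
    also have "\<dots> = w k + sum w T" using fT T by (subst sum.insert) auto
    also have "\<dots> \<le> w (Suc k) + sum w T" using lt by simp
    also have "\<dots> = sum w (insert (Suc k) T)" using fT T by (subst sum.insert) auto
    finally have "q \<le> sum w (insert (Suc k) T)" .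
    moreover have "insert (Suc k) T \<subseteq> {1..n}" using T k by auto
    ultimately show "v (insert (Suc k) T)" using repD[OF r] by auto
  qed
  have main: "v S \<longleftrightarrow> q \<le> sum ?w S" if S: "S \<subseteq> {1..n}" for S
  proof -
    have fS: "finite S" using S finite_subset by blast
    define T where "T = S - {k, Suc k}"
    have fT: "finite T" and TN: "T \<subseteq> {1..n} - {k, Suc k}" using fS S unfolding T_def by auto
    have eqT: "sum ?w T = sum w T" by (rule sum.cong) (auto simp: T_def)
    have vS: "v S \<longleftrightarrow> q \<le> sum w S" using r S unfolding rep_def by auto
    consider (both) "k \<in> S" "Suc k \<in> S" | (ok) "k \<in> S" "Suc k \<notin> S" | (sk) "k \<notin> S" "Suc k \<in> S"
      | (none) "k \<notin> S" "Suc k \<notin> S" by blast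
    then show ?thesis
    proof cases
      case both
      have SS: "S = insert k (insert (Suc k) T)" using both unfolding T_def by auto
      have n1: "k \<notin> insert (Suc k) T" "Suc k \<notin> T" unfolding T_def by auto
      have "sum ?w S = ?w k + (?w (Suc k) + sum ?w T)" unfolding SS using n1 fT by simp
      also have "\<dots> = w k + (w (Suc k) + sum w T)" using eqT by simp
      also have "\<dots> = sum w S" unfolding SS using n1 fT by simp
      finally have "sum ?w S = sum w S" .
      then show ?thesis using vS by simp
    next
      case ok
      have SS: "S = insert k T" using ok unfolding T_def by auto
      have n1: "k \<notin> T" "Suc k \<notin> T" unfolding T_def by auto
      have "sum ?w S = ?w k + sum ?w T" unfolding SS using n1 fT by simp
      also have "\<dots> = w (Suc k) + sum w T" using eqT by simp
      also have "\<dots> = sum w (insert (Suc k) T)" using fT n1 by simp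
      finally have "sum ?w S = sum w (insert (Suc k) T)" .
      moreover have "v S \<longleftrightarrow> v (insert (Suc k) T)" using SS sym[OF TN] by simp
      moreover have "insert (Suc k) T \<subseteq> {1..n}" using TN k by auto
      ultimately show ?thesis using r unfolding rep_def by auto
    next
      case sk
      have SS: "S = insert (Suc k) T" using sk unfolding T_def by auto
      have n1: "k \<notin> T" "Suc k \<notin> T" unfolding T_def by auto
      have "sum ?w S = ?w (Suc k) + sum ?w T" unfolding SS using n1 fT by simp
      also have "\<dots> = w k + sum w T" using eqT by simp
      also have "\<dots> = sum w (insert k T)" using fT n1 by simp
      finally have "sum ?w S = sum w (insert k T)" .
      moreover have "v S \<longleftrightarrow> v (insert k T)" using SS sym[OF TN] by simp
      moreover have "insert k T \<subseteq> {1..n}" using TN k by auto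
      ultimately show ?thesis using r unfolding rep_def by auto
    next
      case none
      have "S = T" using none unfolding T_def by auto
      then show ?thesis using vS eqT by simp
    qed
  qed
  have nn: "\<forall>i\<in>{1..n}. ?w i \<ge> 0" using r k unfolding rep_def by auto
  have q0: "q \<ge> 0" using r unfolding rep_def by simp
  show ?thesis unfolding rep_def
  proof (intro conjI)
    show "0 \<le> q" by (rule q0)
    show "\<forall>i\<in>{1..n}. ?w i \<ge> 0" by (rule nn)
    show "\<forall>S. S \<subseteq> {1..n} \<longrightarrow> (v S \<longleftrightarrow> q \<le> sum ?w S)"
    proof (intro allI impI)
      fix S :: "nat set" assume "S \<subseteq> {1..n}" thus "v S \<longleftrightarrow> q \<le> sum ?w S" by (rule main)
    qed
  qed
qed

lemma sorted_rep:
  assumes G: "G \<in> cwvg n"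
  shows "\<exists>q w. rep n G q w \<and> (\<forall>i. 1 \<le> i \<and> i < n \<longrightarrow> w (Suc i) \<le> w i)"
proof -
  define N where "N = {1..n::nat}"
  have "\<exists>(q::real) (w0::nat\<Rightarrow>real). q \<ge> 0 \<and> (\<forall>i\<in>N. w0 i \<ge> 0) \<and>
        (\<forall>S. S \<subseteq> N \<longrightarrow> (G S \<longleftrightarrow> (\<Sum>i\<in>S. w0 i) \<ge> q))"
    using G unfolding cwvg_def weighted_game_def N_def by simp
  then obtain q :: real and w0 :: "nat \<Rightarrow> real" where all: "q \<ge> 0 \<and> (\<forall>i\<in>N. w0 i \<ge> 0) \<and>
     (\<forall>S. S \<subseteq> N \<longrightarrow> (G S \<longleftrightarrow> sum w0 S \<ge> q))" by (elim exE) iprover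
  have q: "q \<ge> 0" using all by (rule conjunct1)
  have w0: "\<forall>i\<in>N. w0 i \<ge> 0" using all by simp
  have r0: "\<forall>S. S \<subseteq> N \<longrightarrow> (G S \<longleftrightarrow> sum w0 S \<ge> q)" using all by (rule conjunct2[THEN conjunct2])
  have des: "desirable n G i (Suc i)" if "1 \<le> i" "i < n" for i
  proof -
    have "\<forall>i. 1 \<le> i \<and> i < n \<longrightarrow> desirable n G i (Suc i)" using G unfolding cwvg_def by simp
    thus ?thesis using that by simp
  qed
  define V where "V = w0 ` N"
  define ext :: "(nat \<Rightarrow> real) \<Rightarrow> nat \<Rightarrow> real" where "ext f = (\<lambda>i. if i \<in> N then f i else 0)" for f
  define F where "F = ext ` (PiE N (\<lambda>_. V))"
  have fF: "finite F" unfolding F_def V_def N_def by (intro finite_imageI finite_PiE) auto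
  define R where "R = {w \<in> F. rep n G q w}"
  have fR: "finite R" using fF unfolding R_def by auto
  have w1R: "ext w0 \<in> R"
  proof -
    have e: "ext w0 = ext (restrict w0 N)" unfolding ext_def by (rule HOL.ext) simp
    have "restrict w0 N \<in> PiE N (\<lambda>_. V)" unfolding V_def by simp
    hence "ext w0 \<in> F" unfolding F_def using e by (metis image_eqI)
    moreover have "rep n G q (ext w0)"
      unfolding rep_def
    proof (intro conjI allI impI ballI)
      show "0 \<le> q" by fact
      fix i assume "i \<in> {1..n}" thus "0 \<le> ext w0 i" using w0 unfolding ext_def N_def by auto
    next
      fix S assume S: "S \<subseteq> {1..n}"
      have "sum (ext w0) S = sum w0 S" by (rule sum.cong) (use S in \<open>auto simp: ext_def N_def\<close>)
      thus "G S \<longleftrightarrow> q \<le> sum (ext w0) S" using r0 S unfolding N_def by auto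
    qed
    ultimately show ?thesis unfolding R_def by simp
  qed
  define \<Phi> where "\<Phi> u = (\<Sum>i\<in>N. real i * u i)" for u
  have ne: "\<Phi> ` R \<noteq> {}" using w1R by auto
  obtain w where wR: "w \<in> R" and wmin: "\<Phi> w = Min (\<Phi> ` R)"
    using Min_in[OF finite_imageI[OF fR] ne] by (metis imageE)
  have wle: "\<Phi> w \<le> \<Phi> u" if "u \<in> R" for u
    using wmin Min_le[OF finite_imageI[OF fR], of "\<Phi> u" \<Phi>] that by simp
  have srt: "w (Suc k) \<le> w k" if k: "1 \<le> k" "k < n" for k
  proof (rule ccontr)
    assume "\<not> w (Suc k) \<le> w k"
    hence lt: "w k < w (Suc k)" by simp
    define w' where "w' = w(k := w (Suc k), Suc k := w k)"
    have kN: "k \<in> N" "Suc k \<in> N" using k unfolding N_def by auto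
    from wR obtain f where f: "f \<in> PiE N (\<lambda>_. V)" and wf: "w = ext f" using wR unfolding R_def F_def by blast
    define f' where "f' = f(k := f (Suc k), Suc k := f k)"
    have f': "f' \<in> PiE N (\<lambda>_. V)"
    proof -
      have "\<forall>i\<in>N. f i \<in> V" "\<forall>i. i \<notin> N \<longrightarrow> f i = undefined" using f unfolding PiE_def Pi_def extensional_def by auto
      hence "\<forall>i\<in>N. f' i \<in> V" "\<forall>i. i \<notin> N \<longrightarrow> f' i = undefined" using kN unfolding f'_def by auto
      thus ?thesis unfolding PiE_def Pi_def extensional_def by auto
    qed
    have "w' = ext f'" unfolding w'_def f'_def wf ext_def using kN by (intro ext) auto
    hence "w' \<in> F" using f' unfolding F_def by auto
    moreover have "rep n G q w'" unfolding w'_def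
      by (rule swap_rep[OF _ des[OF k] k lt]) (use wR in \<open>auto simp: R_def\<close>)
    ultimately have w'R: "w' \<in> R" unfolding R_def by auto
    have split: "\<Phi> u = real k * u k + (real (Suc k) * u (Suc k) + (\<Sum>i\<in>N - {k} - {Suc k}. real i * u i))" for u
    proof -
      have fN: "finite N" unfolding N_def by auto
      have "\<Phi> u = real k * u k + (\<Sum>i\<in>N - {k}. real i * u i)"
        unfolding \<Phi>_def by (rule sum_rm[OF fN kN(1)])
      also have "(\<Sum>i\<in>N - {k}. real i * u i) = real (Suc k) * u (Suc k) + (\<Sum>i\<in>N - {k} - {Suc k}. real i * u i)"
        by (rule sum_rm) (use fN kN in auto)
      finally show ?thesis .
    qed
    have rest: "(\<Sum>i\<in>N - {k} - {Suc k}. real i * w' i) = (\<Sum>i\<in>N - {k} - {Suc k}. real i * w i)"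
      by (rule sum.cong) (auto simp: w'_def)
    have "\<Phi> w' = real k * w (Suc k) + (real (Suc k) * w k + (\<Sum>i\<in>N - {k} - {Suc k}. real i * w i))"
      using split[of w'] rest by (simp add: w'_def)
    moreover have "\<Phi> w = real k * w k + (real (Suc k) * w (Suc k) + (\<Sum>i\<in>N - {k} - {Suc k}. real i * w i))"
      using split[of w] .
    ultimately have "\<Phi> w' < \<Phi> w" using lt by (simp add: algebra_simps)
    thus False using wle[OF w'R] by simp
  qed
  show ?thesis using wR srt unfolding R_def by auto
qed

lemma sorted_chain:
  assumes "\<forall>i. 1 \<le> i \<and> i < n \<longrightarrow> (w::nat\<Rightarrow>real) (Suc i) \<le> w i" "1 \<le> i" "i \<le> j" "j \<le> n"
  shows "w j \<le> w i"
  using assms(3,4)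
proof (induction j)
  case 0 then show ?case using assms(2) by simp
next
  case (Suc j)
  show ?case
  proof (cases "i = Suc j")
    case True then show ?thesis by simp
  next
    case False
    hence "i \<le> j" using Suc.prems by simp
    hence "w j \<le> w i" using Suc by simp
    moreover have "w (Suc j) \<le> w j" using assms(1,2) \<open>i \<le> j\<close> Suc.prems by simp
    ultimately show ?thesis by simp
  qed
qed

lemma contains_mwc:
  assumes T: "T \<subseteq> {1..n}" "G T"
  shows "\<exists>M\<in>wmin n G. M \<subseteq> T"
proof -
  define C where "C = {X. X \<subseteq> T \<and> G X}"
  have fT: "finite T" using T finite_subset by blast
  have fC: "finite C" proof (rule finite_subset[of _ "Pow T"]) show "C \<subseteq> Pow T" unfolding C_def by auto show "finite (Pow T)" using fT by simp qed
  have ne: "card ` C \<noteq> {}" using T unfolding C_def by auto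
  obtain X where XC: "X \<in> C" and Xm: "card X = Min (card ` C)"
    using Min_in[OF finite_imageI[OF fC] ne] by (metis imageE)
  have le: "card X \<le> card Y" if "Y \<in> C" for Y
    using Xm Min_le[OF finite_imageI[OF fC], of "card Y" card] that by simp
  have fX: "finite X" using XC fT unfolding C_def using finite_subset by blast
  have "\<not> G (X - {i})" if i: "i \<in> X" for i
  proof
    assume "G (X - {i})"
    hence "X - {i} \<in> C" using XC unfolding C_def by auto
    hence "card X \<le> card (X - {i})" by (rule le)
    moreover have "card (X - {i}) < card X" using fX i by (rule card_Diff1_less)
    ultimately show False by simp
  qed
  moreover have "X \<subseteq> {1..n}" "G X" using XC T unfolding C_def by auto
  ultimately have "X \<in> wmin n G" unfolding wmin_def by auto
  thus ?thesis using XC unfolding C_def by auto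
qed

lemma step_down:
  assumes G: "G \<in> cwvg n" and e: "\<not> G {}" and ex: "G T0"
  shows "\<exists>G'. mwc_step n G' G"
proof -
  define N where "N = {1..n}"
  have fN: "finite N" unfolding N_def by simp
  obtain q w where r: "rep n G q w" and srt: "\<forall>i. 1 \<le> i \<and> i < n \<longrightarrow> w (Suc i) \<le> w i"
    using sorted_rep[OF G] by blast
  have sg: "simple_game n G" using G unfolding cwvg_def weighted_game_def by simp
  have desG: "desirable n G i (Suc i)" if "1 \<le> i" "i < n" for i
  proof -
    have "\<forall>i. 1 \<le> i \<and> i < n \<longrightarrow> desirable n G i (Suc i)" using G unfolding cwvg_def by simp
    thus ?thesis using that by simp
  qed
  have rD: "G X \<longleftrightarrow> q \<le> sum w X" if "X \<subseteq> N" for X using repD[OF r] that unfolding N_def by simp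
  have wnn: "w i \<ge> 0" if "i \<in> N" for i using r that unfolding rep_def N_def by simp
  have q0: "q \<ge> 0" using r unfolding rep_def by simp
  have monoG: "G Y" if "X \<subseteq> Y" "Y \<subseteq> N" "G X" for X Y using rep_mono[OF r] that unfolding N_def by blast
  have GN: "X \<subseteq> N" if "G X" for X using sg that unfolding simple_game_def N_def by blast
  have wminN: "M \<subseteq> N" "G M" if "M \<in> wmin n G" for M using that unfolding wmin_def N_def by auto
  have fW: "finite (wmin n G)" by (rule finite_wmin)
  obtain M0 where M0: "M0 \<in> wmin n G" using contains_mwc[of T0 n G] GN[OF ex] ex unfolding N_def by blast
  define U where "U = \<Union> (wmin n G)"
  have fU: "finite U" using fW wminN fN unfolding U_def by (meson finite_Union finite_subset)
  have UN: "U \<subseteq> N" using wminN unfolding U_def by blast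
  have Une: "U \<noteq> {}"
  proof -
    have "M0 \<noteq> {}" using wminN(2)[OF M0] e by auto
    thus ?thesis using M0 unfolding U_def by blast
  qed
  define m where "m = Max U"
  have mU: "m \<in> U" unfolding m_def using fU Une by (rule Max_in)
  then obtain Mm where Mm: "Mm \<in> wmin n G" "m \<in> Mm" unfolding U_def by blast
  have le_m: "i \<le> m" if "M \<in> wmin n G" "i \<in> M" for M i
    unfolding m_def using fU that unfolding U_def by (intro Max_ge) auto
  have mN: "m \<in> N" using mU UN by blast
  have null_rm: "G (X \<inter> {..m})" if XN: "X \<subseteq> N" and GX: "G X" for X
  proof -
    obtain M where M: "M \<in> wmin n G" "M \<subseteq> X" using contains_mwc[of X n G] XN GX unfolding N_def by blast
    have "M \<subseteq> X \<inter> {..m}" using M le_m by auto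
    thus ?thesis using monoG wminN(2)[OF M(1)] XN by blast
  qed
  define Wm where "Wm = {T. T \<subseteq> N \<and> G T \<and> m \<in> T}"
  have fWm: "finite Wm"
  proof (rule finite_subset[of _ "Pow N"])
    show "Wm \<subseteq> Pow N" unfolding Wm_def by auto
    show "finite (Pow N)" using fN by simp
  qed
  have MmWm: "Mm \<in> Wm" using Mm wminN unfolding Wm_def by auto
  define a where "a = Min (sum w ` Wm)"
  have aWm: "a \<le> sum w T" if "T \<in> Wm" for T
    unfolding a_def using Min_le[OF finite_imageI[OF fWm], of "sum w T" "sum w"] that by simp
  have "a \<in> sum w ` Wm" unfolding a_def using MmWm fWm by (intro Min_in) auto
  then obtain S0 where S0: "S0 \<in> Wm" "sum w S0 = a" by (metis imageE)
  define Z where "Z = {T \<in> Wm. sum w T = a}"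
  have fZ: "finite Z" using fWm unfolding Z_def by simp
  have S0Z: "S0 \<in> Z" using S0 unfolding Z_def by simp
  define c where "c = Min (card ` Z)"
  have cZ: "c \<le> card T" if "T \<in> Z" for T
    unfolding c_def using Min_le[OF finite_imageI[OF fZ], of "card T" card] that by simp
  have "c \<in> card ` Z" unfolding c_def using S0Z fZ by (intro Min_in) auto
  then obtain S1 where S1: "S1 \<in> Z" "card S1 = c" by (metis imageE)
  define Z1 where "Z1 = {T \<in> Z. card T = c}"
  have fZ1: "finite Z1" using fZ unfolding Z1_def by simp
  have S1Z1: "S1 \<in> Z1" using S1 unfolding Z1_def by simp
  define ix :: "nat set \<Rightarrow> nat" where "ix T = sum id T" for T
  have "Max (ix ` Z1) \<in> ix ` Z1" using S1Z1 fZ1 by (intro Max_in) auto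
  then obtain S where SZ1: "S \<in> Z1" and Six: "ix S = Max (ix ` Z1)" by (metis imageE)
  have ixS: "ix T \<le> ix S" if "T \<in> Z1" for T
    unfolding Six using Max_ge[OF finite_imageI[OF fZ1], of "ix T" ix] that by simp
  have SN: "S \<subseteq> N" and GS: "G S" and mS: "m \<in> S" and wS: "sum w S = a" and cS: "card S = c"
    using SZ1 unfolding Z1_def Z_def Wm_def by auto
  have fS: "finite S" using SN fN finite_subset by blast
  have qa: "q \<le> a" using rD[OF SN] GS wS by simp
  define L where "L = {T. T \<subseteq> N \<and> \<not> G T}"
  have fL: "finite L"
  proof (rule finite_subset[of _ "Pow N"])
    show "L \<subseteq> Pow N" unfolding L_def by auto
    show "finite (Pow N)" using fN by simp
  qed
  have eL: "{} \<in> L" using e unfolding L_def by simp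
  define \<delta> where "\<delta> = q - Max (sum w ` L)"
  have "Max (sum w ` L) \<in> sum w ` L" using eL fL by (intro Max_in) auto
  then obtain T1 where T1: "T1 \<in> L" "sum w T1 = Max (sum w ` L)" by (metis imageE)
  have dpos: "\<delta> > 0" using T1 rD unfolding \<delta>_def L_def by force
  have dL: "sum w T \<le> q - \<delta>" if "T \<subseteq> N" "\<not> G T" for T
  proof -
    have "T \<in> L" using that unfolding L_def by simp
    hence "sum w T \<le> Max (sum w ` L)" using Max_ge[OF finite_imageI[OF fL], of "sum w T" "sum w"] by simp
    thus ?thesis unfolding \<delta>_def by simp
  qed
  define D where "D = (\<lambda>T. sum w T - a) ` {T \<in> Wm. a < sum w T}"
  have fD: "finite D" using fWm unfolding D_def by simp
  define \<gamma> where "\<gamma> = Min (insert 1 D)"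
  have gpos: "\<gamma> > 0"
  proof -
    have "\<gamma> \<in> insert 1 D" unfolding \<gamma>_def using fD by (intro Min_in) auto
    thus ?thesis unfolding D_def by auto
  qed
  have gD: "\<gamma> \<le> sum w T - a" if "T \<in> Wm" "a < sum w T" for T
  proof -
    have "sum w T - a \<in> insert 1 D" using that unfolding D_def by auto
    thus ?thesis unfolding \<gamma>_def using fD by simp
  qed
  define \<epsilon> where "\<epsilon> = min \<gamma> (\<delta> / (real n + 1))"
  have epos: "\<epsilon> > 0" unfolding \<epsilon>_def using gpos dpos by simp
  have eg: "\<epsilon> \<le> \<gamma>" unfolding \<epsilon>_def by simp
  have en1: "\<epsilon> * (real n + 1) \<le> \<delta>"
  proof -
    have "\<epsilon> \<le> \<delta> / (real n + 1)" unfolding \<epsilon>_def by simp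
    thus ?thesis by (simp add: field_simps)
  qed
  have en: "\<epsilon> * real k < \<delta>" if "k \<le> n" for k
  proof -
    have "\<epsilon> * real k \<le> \<epsilon> * real n" using that epos by simp
    moreover have "\<epsilon> * (real n + 1) = \<epsilon> * real n + \<epsilon>" by (simp add: algebra_simps)
    ultimately show ?thesis using en1 epos by linarith
  qed
  have wm_big: "w m \<ge> a - q + \<delta>"
  proof -
    have fMm: "finite Mm" using wminN(1)[OF Mm(1)] fN finite_subset by blast
    have "\<not> G (Mm - {m})" using Mm unfolding wmin_def by auto
    hence "sum w (Mm - {m}) \<le> q - \<delta>" using dL wminN(1)[OF Mm(1)] by blast
    moreover have "sum w Mm = w m + sum w (Mm - {m})" using fMm Mm(2) by (rule sum_rm)
    moreover have "a \<le> sum w Mm" using aWm MmWm by simp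
    ultimately show ?thesis by simp
  qed
  have Sm_lose: "\<not> G (S - {m})"
  proof -
    have "sum w S = w m + sum w (S - {m})" using fS mS by (rule sum_rm)
    hence "sum w (S - {m}) < q" using wm_big wS dpos by simp
    thus ?thesis using rD[of "S - {m}"] SN by auto
  qed
  have Swmin: "S \<in> wmin n G"
  proof -
    have "\<not> G (S - {j})" if j: "j \<in> S" for j
    proof (cases "j = m")
      case True then show ?thesis using Sm_lose by simp
    next
      case False
      show ?thesis
      proof
        assume g: "G (S - {j})"
        have "sum w S = w j + sum w (S - {j})" using fS j by (rule sum_rm)
        moreover have "w j \<ge> 0" using wnn j SN by blast
        moreover have Sj: "S - {j} \<in> Wm" using g SN mS False unfolding Wm_def by auto
        ultimately have "S - {j} \<in> Z" using aWm[OF Sj] wS unfolding Z_def by simp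
        hence "c \<le> card (S - {j})" by (rule cZ)
        moreover have "card (S - {j}) < card S" using fS j by (rule card_Diff1_less)
        ultimately show False using cS by simp
      qed
    qed
    thus ?thesis using SN GS unfolding wmin_def N_def by auto
  qed
  have Sle: "S \<subseteq> {..m}" using le_m[OF Swmin] by auto
  define G' where "G' = (\<lambda>T. G T \<and> T \<inter> {..m} \<noteq> S)"
  define cc where "cc = a - q + \<epsilon> / 2"
  define w' where "w' = (\<lambda>i. if m < i then 0 else w i + (if i \<in> S then 0 else \<epsilon>) - (if i = m then cc else 0))"
  have sumw': "sum w' T = sum w (T \<inter> {..m}) + \<epsilon> * real (card (T \<inter> {..m} - S)) - (if m \<in> T then cc else 0)"
    if TN: "T \<subseteq> N" for T
  proof -
    have fT: "finite T" using TN fN finite_subset by blast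
    have "sum w' T = sum w' (T \<inter> {..m}) + sum w' (T - {..m})" using fT by (simp add: sum.Int_Diff)
    moreover have "sum w' (T - {..m}) = 0" unfolding w'_def by (rule sum.neutral) auto
    moreover have "sum w' (T \<inter> {..m}) = sum (\<lambda>i. w i + (if i \<in> S then 0 else \<epsilon>) - (if i = m then cc else 0)) (T \<inter> {..m})"
      unfolding w'_def by (rule sum.cong) auto
    moreover have "\<dots> = sum w (T \<inter> {..m}) + sum (\<lambda>i. if i \<in> S then 0 else \<epsilon>) (T \<inter> {..m}) - sum (\<lambda>i. if i = m then cc else 0) (T \<inter> {..m})"
      by (simp add: sum.distrib sum_subtractf)
    moreover have "sum (\<lambda>i. if i \<in> S then 0 else \<epsilon>) (T \<inter> {..m}) = \<epsilon> * real (card (T \<inter> {..m} - S))"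
    proof -
      have "sum (\<lambda>i. if i \<in> S then 0 else \<epsilon>) (T \<inter> {..m}) = sum (\<lambda>i. \<epsilon>) (T \<inter> {..m} - S)"
        using fT by (intro sum.mono_neutral_cong_right) auto
      thus ?thesis by simp
    qed
    moreover have "sum (\<lambda>i. if i = m then cc else 0) (T \<inter> {..m}) = (if m \<in> T then cc else 0)"
      using fT by (simp add: sum.delta)
    ultimately show ?thesis by simp
  qed
  have G'eq: "G' T \<longleftrightarrow> G (T \<inter> {..m}) \<and> T \<inter> {..m} \<noteq> S" if TN: "T \<subseteq> N" for T
  proof -
    have "G T \<longleftrightarrow> G (T \<inter> {..m})" using null_rm[OF TN] monoG[of "T \<inter> {..m}" T] TN by blast
    thus ?thesis unfolding G'_def by simp
  qed
  have repG': "G' T \<longleftrightarrow> q \<le> sum w' T" if TN: "T \<subseteq> N" for T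
  proof -
    define T' where "T' = T \<inter> {..m}"
    have T'N: "T' \<subseteq> N" using TN unfolding T'_def by auto
    have fT': "finite T'" using T'N fN finite_subset by blast
    define k where "k = card (T' - S)"
    have kn: "k \<le> n"
    proof -
      have "card (T' - S) \<le> card N" using T'N fN by (intro card_mono) auto
      thus ?thesis unfolding k_def N_def by simp
    qed
    have s: "sum w' T = sum w T' + \<epsilon> * real k - (if m \<in> T' then cc else 0)"
      using sumw'[OF TN] mN unfolding T'_def k_def by (simp add: N_def)
    have g: "G' T \<longleftrightarrow> G T' \<and> T' \<noteq> S" using G'eq[OF TN] unfolding T'_def .
    have ek: "\<epsilon> * real k < \<delta>" using en[OF kn] .
    have ek0: "0 \<le> \<epsilon> * real k" using epos by simp
    show ?thesis
    proof (cases "m \<in> T'")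
      case False
      hence ne: "T' \<noteq> S" using mS by auto
      show ?thesis
      proof (cases "G T'")
        case True
        hence "q \<le> sum w T'" using rD[OF T'N] by simp
        thus ?thesis using g s ne False True ek0 by simp
      next
        case nG: False
        have "sum w T' \<le> q - \<delta>" using dL[OF T'N nG] .
        thus ?thesis using g s False nG ek by simp
      qed
    next
      case True
      show ?thesis
      proof (cases "T' = S")
        case eq: True
        have "k = 0" unfolding k_def eq by simp
        hence "sum w' T = q - \<epsilon> / 2" using s True eq wS unfolding cc_def by simp
        thus ?thesis using g eq epos by simp
      next
        case ne: False
        show ?thesis
        proof (cases "G T'")
          case gT: True
          have T'Wm: "T' \<in> Wm" using gT T'N True unfolding Wm_def by simp
          have "q \<le> sum w' T"
          proof (cases "a < sum w T'")
            case True
            have "\<gamma> \<le> sum w T' - a" by (rule gD[OF T'Wm True])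
            moreover have "sum w' T = sum w T' + \<epsilon> * real k - (a - q + \<epsilon> / 2)"
              using s \<open>m \<in> T'\<close> unfolding cc_def by simp
            ultimately show ?thesis using eg ek0 epos by linarith
          next
            case False
            hence aeq: "sum w T' = a" using aWm[OF T'Wm] by simp
            hence "T' \<in> Z" using T'Wm unfolding Z_def by simp
            hence cT: "c \<le> card T'" by (rule cZ)
            have "k \<ge> 1"
            proof (rule ccontr)
              assume "\<not> k \<ge> 1"
              hence "card (T' - S) = 0" unfolding k_def by simp
              hence "T' - S = {}" using fT' by simp
              hence "T' \<subset> S" using ne by auto
              hence "card T' < card S" using fS by (simp add: psubset_card_mono)
              thus False using cT cS by simp
            qed
            hence "\<epsilon> \<le> \<epsilon> * real k" using epos by simp
            moreover have "sum w' T = sum w T' + \<epsilon> * real k - (a - q + \<epsilon> / 2)"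
              using s \<open>m \<in> T'\<close> unfolding cc_def by simp
            ultimately show ?thesis using aeq epos by linarith
          qed
          thus ?thesis using g gT ne by simp
        next
          case nG: False
          have "sum w T' \<le> q - \<delta>" using dL[OF T'N nG] .
          hence "sum w' T < q" using s \<open>m \<in> T'\<close> ek qa epos unfolding cc_def by simp
          thus ?thesis using g nG by simp
        qed
      qed
    qed
  qed
  have w'nn: "w' i \<ge> 0" if iN: "i \<in> N" for i
  proof -
    have "w i \<ge> 0" using wnn iN .
    moreover have "w m - cc > 0"
    proof -
      have "0 \<le> \<epsilon> * real n" using epos by simp
      hence "\<epsilon> \<le> \<delta>" using en1 by (simp add: algebra_simps)
      thus ?thesis using wm_big epos unfolding cc_def by simp
    qed
    ultimately show ?thesis unfolding w'_def using mS epos by auto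
  qed
  have sgG': "simple_game n G'" using sg unfolding simple_game_def G'_def by auto
  have wgG': "weighted_game n G'"
    unfolding weighted_game_def
  proof (intro conjI)
    show "simple_game n G'" by fact
    show "\<exists>(q::real) (w::nat \<Rightarrow> real). q \<ge> 0 \<and> (\<forall>i\<in>{1..n}. w i \<ge> 0) \<and>
        (\<forall>S. S \<subseteq> {1..n} \<longrightarrow> (G' S \<longleftrightarrow> (\<Sum>i\<in>S. w i) \<ge> q))"
      using q0 w'nn repG' unfolding N_def by blast
  qed
  have desG': "desirable n G' i (Suc i)" if i: "1 \<le> i" "i < n" for i
    unfolding desirable_def
  proof (intro allI impI)
    fix T assume TN: "T \<subseteq> {1..n} - {i, Suc i}" and g1: "G' (insert (Suc i) T)"
    have T1N: "insert (Suc i) T \<subseteq> N" and T2N: "insert i T \<subseteq> N" using TN i unfolding N_def by auto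
    have "G (insert (Suc i) T)" using g1 unfolding G'_def by simp
    hence g2: "G (insert i T)" using desG[OF i] TN unfolding desirable_def by blast
    have "insert i T \<inter> {..m} \<noteq> S"
    proof
      assume eqS: "insert i T \<inter> {..m} = S"
      have iT: "i \<notin> T" "Suc i \<notin> T" using TN by auto
      consider (gt) "m < i" | (eq) "i = m" | (lt) "i < m" by linarith
      then show False
      proof cases
        case gt
        hence "insert (Suc i) T \<inter> {..m} = S" using eqS by auto
        thus False using g1 unfolding G'_def by simp
      next
        case eq
        hence "insert (Suc i) T \<inter> {..m} = S - {m}" using eqS iT by auto
        moreover have "G (insert (Suc i) T \<inter> {..m})" using null_rm[OF T1N] g1 unfolding G'_def by simp
        ultimately show False using Sm_lose by simp
      next
        case lt
        have iS: "i \<in> S" using eqS lt by auto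
        have SiS: "Suc i \<notin> S" using eqS iT by auto
        define S' where "S' = insert (Suc i) (S - {i})"
        have S'eq: "insert (Suc i) T \<inter> {..m} = S'" unfolding S'_def using eqS iT lt by auto
        have gS': "G S'" using null_rm[OF T1N] g1 S'eq unfolding G'_def by simp
        have S'N: "S' \<subseteq> N" using S'eq T1N by auto
        have mS': "m \<in> S'" unfolding S'_def using mS lt by auto
        have S'Wm: "S' \<in> Wm" using gS' S'N mS' unfolding Wm_def by simp
        have fS': "finite (S - {i})" using fS by simp
        have sumS': "sum w S' = w (Suc i) + sum w (S - {i})"
          unfolding S'_def using fS' SiS by simp
        have sumS: "sum w S = w i + sum w (S - {i})" using fS iS by (rule sum_rm)
        have "w (Suc i) \<le> w i" using srt i by simp
        hence "sum w S' \<le> a" using sumS' sumS wS by simp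
        hence "sum w S' = a" using aWm[OF S'Wm] by simp
        hence S'Z: "S' \<in> Z" using S'Wm unfolding Z_def by simp
        have "card S' = card S"
        proof -
          have "card S' = Suc (card (S - {i}))" unfolding S'_def using fS' SiS by simp
          also have "\<dots> = card S" using fS iS by (rule card_Suc_Diff1)
          finally show ?thesis .
        qed
        hence "S' \<in> Z1" using S'Z cS unfolding Z1_def by simp
        hence "ix S' \<le> ix S" by (rule ixS)
        moreover have "ix S' = Suc i + ix (S - {i})" unfolding S'_def ix_def using fS' SiS by simp
        moreover have "ix S = i + ix (S - {i})" unfolding ix_def using sum_rm[OF fS iS, of id] by simp
        ultimately show False by simp
      qed
    qed
    thus "G' (insert i T)" using g2 unfolding G'_def by simp
  qed
  have G'c: "G' \<in> cwvg n" unfolding cwvg_def using wgG' desG' by simp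
  have wminG': "wmin n G' = wmin n G - {S}"
  proof
    show "wmin n G - {S} \<subseteq> wmin n G'"
    proof
      fix X assume X: "X \<in> wmin n G - {S}"
      hence XW: "X \<in> wmin n G" and XS: "X \<noteq> S" by auto
      have "X \<subseteq> {..m}" using le_m[OF XW] by auto
      hence "X \<inter> {..m} = X" by auto
      thus "X \<in> wmin n G'" using XW XS unfolding wmin_def G'_def by auto
    qed
  next
    show "wmin n G' \<subseteq> wmin n G - {S}"
    proof
      fix X assume X: "X \<in> wmin n G'"
      have XN: "X \<subseteq> N" and gX: "G X" and XmS: "X \<inter> {..m} \<noteq> S"
        and mn: "\<And>i. i \<in> X \<Longrightarrow> \<not> G' (X - {i})"
        using X unfolding wmin_def G'_def N_def by auto
      have XS: "X \<noteq> S" using XmS Sle by auto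
      have "\<not> G (X - {i})" if iX: "i \<in> X" for i
      proof
        assume gXi: "G (X - {i})"
        hence eqS: "(X - {i}) \<inter> {..m} = S" using mn[OF iX] unfolding G'_def by simp
        show False
        proof (cases "m < i")
          case True
          hence "X \<inter> {..m} = S" using eqS by auto
          thus False using XmS by simp
        next
          case False
          have iS: "i \<notin> S" using eqS by auto
          have "i \<noteq> m" using iS mS by blast
          hence im: "i < m" using False by simp
          have XmI: "X \<inter> {..m} = insert i S" using eqS iX False by auto
          have mX: "m \<in> X" using XmI mS by auto
          have sub: "insert i (S - {m}) \<subseteq> X - {m}" using XmI im by auto
          have iN: "i \<in> N" using iX XN by auto
          have sub2: "insert i (S - {m}) \<subseteq> N" using iN SN by auto
          have "w m \<le> w i" using sorted_chain[OF srt, of i m] iN mN im unfolding N_def by simp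
          moreover have "sum w (insert i (S - {m})) = w i + sum w (S - {m})" using fS iS by simp
          moreover have "sum w S = w m + sum w (S - {m})" using fS mS by (rule sum_rm)
          ultimately have "q \<le> sum w (insert i (S - {m}))" using wS qa by simp
          hence "G (insert i (S - {m}))" using rD[OF sub2] by simp
          hence "G (X - {m})" using monoG[OF sub] XN by blast
          moreover have "(X - {m}) \<inter> {..m} \<noteq> S"
          proof
            assume "(X - {m}) \<inter> {..m} = S"
            moreover have "i \<in> (X - {m}) \<inter> {..m}" using XmI im by auto
            ultimately show False using iS by simp
          qed
          ultimately have "G' (X - {m})" unfolding G'_def by simp
          thus False using mn[OF mX] by simp
        qed
      qed
      hence "X \<in> wmin n G" using XN gX unfolding wmin_def N_def by auto
      thus "X \<in> wmin n G - {S}" using XS by simp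
    qed
  qed
  have "mwc_step n G' G"
    unfolding mwc_step_def
  proof (intro conjI)
    show "G' \<in> cwvg n" by fact
    show "G \<in> cwvg n" by fact
    show "wmin n G' \<subset> wmin n G" using wminG' Swmin by auto
    show "card (wmin n G) = card (wmin n G') + 1"
      using wminG' card_Suc_Diff1[OF fW Swmin] by simp
  qed
  thus ?thesis by blast
qed



lemma least: "G \<in> cwvg n \<Longrightarrow> (mwc_step n)\<^sup>*\<^sup>* (\<lambda>S. False) G"
proof (induction "card (wmin n G)" arbitrary: G rule: less_induct)
  case less
  have Gc: "G \<in> cwvg n" by fact
  show ?case
  proof (cases "\<exists>T. G T")
    case False
    hence "G = (\<lambda>S. False)" by auto
    thus ?thesis by simp
  next
    case True
    then obtain T0 where T0: "G T0" by blast
    show ?thesis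
    proof (cases "G {}")
      case True
      obtain q w where r: "rep n G q w" using sorted_rep[OF Gc] by blast
      have all: "G X" if "X \<subseteq> {1..n}" for X using rep_mono[OF r, of "{}" X] that True by simp
      have "wmin n G = {{}}"
      proof
        show "wmin n G \<subseteq> {{}}"
        proof
          fix X assume X: "X \<in> wmin n G"
          have "X = {}"
          proof (rule ccontr)
            assume "X \<noteq> {}"
            then obtain i where "i \<in> X" by blast
            moreover have "G (X - {i})" using X all[of "X - {i}"] unfolding wmin_def by blast
            ultimately show False using X unfolding wmin_def by auto
          qed
          thus "X \<in> {{}}" by simp
        qed
        show "{{}} \<subseteq> wmin n G" using True unfolding wmin_def by auto
      qed
      hence "mwc_step n (\<lambda>S. False) G" unfolding mwc_step_def using G0_cwvg Gc G0_wmin by auto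
      thus ?thesis by simp
    next
      case False
      obtain G' where st: "mwc_step n G' G" using step_down[OF Gc False T0] by blast
      hence G'c: "G' \<in> cwvg n" and lt: "card (wmin n G') < card (wmin n G)"
        unfolding mwc_step_def by auto
      have "(mwc_step n)\<^sup>*\<^sup>* (\<lambda>S. False) G'" using less.hyps[OF lt G'c] .
      from this st show ?thesis by (metis rtranclp.rtrancl_into_rtrancl)
    qed
  qed
qed

theorem theorem6:
  fixes n :: nat
  assumes "n \<ge> 1"
  shows "partial_order_on (cwvg n) (mwc_rel n)
       \<and> graded_poset (cwvg n) (mwc_rel n) (\<lambda>G. card (wmin n G))
       \<and> (\<exists>G0\<in>cwvg n. (\<forall>G\<in>cwvg n. (G0, G) \<in> mwc_rel n) \<and> card (wmin n G0) = 0)"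
proof -
  let ?r = "mwc_rel n" and ?A = "cwvg n"
  have po: "partial_order_on ?A ?r"
    unfolding partial_order_on_def preorder_on_def
  proof (intro conjI)
    show "?r \<subseteq> ?A \<times> ?A" unfolding mwc_rel_def by auto
    show "refl_on ?A ?r" unfolding refl_on_def mwc_rel_def by auto
    show "trans ?r" unfolding trans_def mwc_rel_def by auto
    show "antisym ?r" unfolding antisym_def mwc_rel_def
    proof (clarsimp)
      fix x y assume a: "(mwc_step n)\<^sup>*\<^sup>* x y" "(mwc_step n)\<^sup>*\<^sup>* y x"
      from rt_card[OF a(1)] rt_card[OF a(2)] show "x = y" by auto
    qed
  qed
  have lst: "\<forall>G\<in>?A. ((\<lambda>S. False), G) \<in> ?r"
    using least G0_cwvg unfolding mwc_rel_def by auto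
  have mono: "\<forall>x y. (x, y) \<in> ?r \<longrightarrow> card (wmin n x) \<le> card (wmin n y)"
    unfolding mwc_rel_def using rt_card by fastforce
  have minim: "\<forall>x y. minimal_in ?A ?r x \<and> minimal_in ?A ?r y \<longrightarrow> card (wmin n x) = card (wmin n y)"
    using lst G0_cwvg unfolding minimal_in_def by metis
  have cov: "\<forall>x y. covers ?r x y \<longrightarrow> card (wmin n y) = card (wmin n x) + 1"
  proof (intro allI impI)
    fix x y assume c: "covers ?r x y"
    hence xy: "(x, y) \<in> ?r" "x \<noteq> y" and nz: "\<not> (\<exists>z. z \<notin> {x, y} \<and> (x, z) \<in> ?r \<and> (z, y) \<in> ?r)"
      unfolding covers_def by auto
    hence rt: "(mwc_step n)\<^sup>*\<^sup>* x y" and xA: "x \<in> ?A" and yA: "y \<in> ?A" unfolding mwc_rel_def by auto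
    from rt xy(2) obtain z where s: "mwc_step n x z" and zy: "(mwc_step n)\<^sup>*\<^sup>* z y"
      by (metis converse_rtranclpE)
    have zA: "z \<in> ?A" and cz: "card (wmin n z) = card (wmin n x) + 1"
      using s unfolding mwc_step_def by auto
    show "card (wmin n y) = card (wmin n x) + 1"
    proof (cases "z = y")
      case True then show ?thesis using cz by simp
    next
      case False
      have "z \<noteq> x" using cz by auto
      moreover have "(x, z) \<in> ?r" using s xA zA unfolding mwc_rel_def by auto
      moreover have "(z, y) \<in> ?r" using zy zA yA unfolding mwc_rel_def by auto
      ultimately show ?thesis using nz False by blast
    qed
  qed
  show ?thesis
    using po mono minim cov lst G0_cwvg G0_wmin unfolding graded_poset_def by auto
qed

end
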